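(* Let $W$ be a finite Coxeter group with simple reflections $S$ and let $J\subseteq S$. For $n\in N_J$ let $\sigma_J(n)$ be the sign of the permutation of $J$ given by $s\mapsto n^{-1}sn$. Then $\sigma_J(n)=\epsilon(n)\alpha_J(n)$ for all $n\in N_J$.
   Context: $W$ acts as a reflection group on $V=\mathbb R^{|S|}$, $\ell$ is its length function, $\epsilon(w)=\det(w|_V)$. $W_J=\langle J\rangle$, $X_J=\{w\in W:\ell(sw)>\ell(w)\ \forall s\in J\}$, and $N_J=\{x\in X_J: x^{-1}Jx=J\}$, a subgroup of $N_W(W_J)$. $\alpha_J(w)=\det(w|_{\operatorname{Fix}(W_J)})$ for $w\in N_W(W_J)$, where $\operatorname{Fix}(W_J)$ is the fixed point subspace of $W_J$ in $V$. *)

theory Defs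
  imports "HOL-Analysis.Analysis" "HOL-Combinatorics.Permutations"
begin

text \<open>
  The simple reflections S are indexed by a finite type 'n (so |S| = CARD('n)),
  V = real^'n, and the simple root of the index i is the unit vector a i.
  W is the group of linear maps of V generated by the reflections sref a i.
\<close>

definition sref :: "('n::finite \<Rightarrow> real^'n) \<Rightarrow> 'n \<Rightarrow> real^'n \<Rightarrow> real^'n" where
  "sref a i x = x - (2 * (x \<bullet> a i)) *\<^sub>R a i"

definition word_map :: "('n::finite \<Rightarrow> real^'n) \<Rightarrow> 'n list \<Rightarrow> real^'n \<Rightarrow> real^'n" where
  "word_map a ws = foldr (\<lambda>i f. sref a i \<circ> f) ws id"

definition coxW :: "('n::finite \<Rightarrow> real^'n) \<Rightarrow> (real^'n \<Rightarrow> real^'n) set" where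
  "coxW a = range (word_map a)"

definition parW :: "('n::finite \<Rightarrow> real^'n) \<Rightarrow> 'n set \<Rightarrow> (real^'n \<Rightarrow> real^'n) set" where
  "parW a J = {word_map a ws | ws. set ws \<subseteq> J}"

definition m_ord :: "('n::finite \<Rightarrow> real^'n) \<Rightarrow> 'n \<Rightarrow> 'n \<Rightarrow> nat" where
  "m_ord a i j = (LEAST k. 0 < k \<and> (sref a i \<circ> sref a j) ^^ k = id)"

text \<open>(W,S) is a finite Coxeter group realised in its geometric representation on
  V = R^|S|: the simple roots form a basis of unit vectors with
  <a_i, a_j> = - cos (pi / m_ij), and W is finite.\<close>
definition finite_coxeter_geom :: "('n::finite \<Rightarrow> real^'n) \<Rightarrow> bool" where
  "finite_coxeter_geom a \<longleftrightarrow>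
     inj a \<and> independent (range a) \<and> (\<forall>i. norm (a i) = 1) \<and>
     finite (coxW a) \<and>
     (\<forall>i j. i \<noteq> j \<longrightarrow> a i \<bullet> a j = - cos (pi / real (m_ord a i j)))"

definition coxlen :: "('n::finite \<Rightarrow> real^'n) \<Rightarrow> (real^'n \<Rightarrow> real^'n) \<Rightarrow> nat" where
  "coxlen a w = (LEAST k. \<exists>ws. length ws = k \<and> word_map a ws = w)"

definition eps :: "(real^'n::finite \<Rightarrow> real^'n) \<Rightarrow> real" where
  "eps w = det (matrix w)"

definition X_J :: "('n::finite \<Rightarrow> real^'n) \<Rightarrow> 'n set \<Rightarrow> (real^'n \<Rightarrow> real^'n) set" where
  "X_J a J = {w \<in> coxW a. \<forall>s\<in>J. coxlen a (sref a s \<circ> w) > coxlen a w}"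

definition N_J :: "('n::finite \<Rightarrow> real^'n) \<Rightarrow> 'n set \<Rightarrow> (real^'n \<Rightarrow> real^'n) set" where
  "N_J a J = {x \<in> X_J a J. (\<lambda>s. inv x \<circ> s \<circ> x) ` (sref a ` J) = sref a ` J}"

definition FixW :: "('n::finite \<Rightarrow> real^'n) \<Rightarrow> 'n set \<Rightarrow> (real^'n) set" where
  "FixW a J = {v. \<forall>w\<in>parW a J. w v = v}"

text \<open>Determinant of a linear map f restricted to a subspace U that f maps into itself:
  Leibniz formula for the matrix of f in a basis B of U
  (entry (b,c) = coefficient of b in f c).\<close>
definition det_on :: "(real^'n::finite) set \<Rightarrow> (real^'n \<Rightarrow> real^'n) \<Rightarrow> real" where
  "det_on U f = (let B = (SOME B. independent B \<and> B \<subseteq> U \<and> span B = U) in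
     (\<Sum>p | p permutes B. of_int (sign p) * (\<Prod>b\<in>B. representation B (f (p b)) b)))"

definition alpha_J :: "('n::finite \<Rightarrow> real^'n) \<Rightarrow> 'n set \<Rightarrow> (real^'n \<Rightarrow> real^'n) \<Rightarrow> real" where
  "alpha_J a J w = det_on (FixW a J) w"

definition sigma_J :: "('n::finite \<Rightarrow> real^'n) \<Rightarrow> 'n set \<Rightarrow> (real^'n \<Rightarrow> real^'n) \<Rightarrow> int" where
  "sigma_J a J n = sign_on J (\<lambda>i. THE j. j \<in> J \<and> inv n \<circ> sref a i \<circ> n = sref a j)"

end

theory Submission
  imports Defs
begin

lemma basis_card:
  fixes B :: "(real^'n::finite) set"
  assumes "independent B" "span B = UNIV"
  shows "finite B" "card B = CARD('n)"
proof -
  show "finite B" using assms(1) by (simp add: independent_imp_finite)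
  have "card B = dim (UNIV :: (real^'n) set)"
    using assms by (intro basis_card_eq_dim) auto
  then show "card B = CARD('n)" by simp
qed

lemma rep_sum_comp:
  fixes B :: "(real^'n::finite) set" and g :: "'n \<Rightarrow> real^'n"
  assumes "independent B" "span B = UNIV" "bij_betw g UNIV B"
  shows "(\<Sum>k\<in>UNIV. representation B x (g k) * (g k) $ i) = x $ i"
proof -
  have fin: "finite B" using basis_card assms by blast
  have "x = (\<Sum>b\<in>B. representation B x b *\<^sub>R b)"
    using assms fin by (intro sum_representation_eq[symmetric]) auto
  also have "\<dots> = (\<Sum>k\<in>UNIV. representation B x (g k) *\<^sub>R g k)"
    using assms(3) by (simp add: sum.reindex_bij_betw[symmetric])
  finally have "x $ i = (\<Sum>k\<in>UNIV. representation B x (g k) *\<^sub>R g k) $ i" by simp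
  then show ?thesis by (simp add: sum_component)
qed

lemma det_basis_formula:
  fixes B :: "(real^'n::finite) set" and f :: "real^'n \<Rightarrow> real^'n"
  assumes indB: "independent B" and spB: "span B = UNIV" and lf: "linear f"
  shows "det (matrix f) = (\<Sum>p | p permutes B. of_int (sign p) * (\<Prod>b\<in>B. representation B (f (p b)) b))"
proof -
  have fin: "finite B" and cardB: "card B = CARD('n)" using basis_card[OF indB spB] by auto
  obtain g :: "'n \<Rightarrow> real^'n" where g: "bij_betw g UNIV B"
    using finite_same_card_bij[OF finite fin] cardB by auto
  have injg: "inj g" using g by (simp add: bij_betw_def)
  define M :: "real^'n^'n" where "M = (\<chi> i j. representation B (f (g j)) (g i))"
  define P :: "real^'n^'n" where "P = (\<chi> i j. (g j) $ i)"
  define Q :: "real^'n^'n" where "Q = (\<chi> i j. representation B (axis j 1) (g i))"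
  have PQ: "P ** Q = mat 1"
  proof -
    have "(P ** Q) $ i $ j = (mat 1 :: real^'n^'n) $ i $ j" for i j
    proof -
      have "(P ** Q) $ i $ j = (\<Sum>k\<in>UNIV. representation B (axis j 1) (g k) * (g k) $ i)"
        by (simp add: matrix_matrix_mult_def P_def Q_def mult.commute)
      also have "\<dots> = (axis j 1 :: real^'n) $ i"
        by (rule rep_sum_comp[OF indB spB g])
      finally show ?thesis by (simp add: mat_def axis_def)
    qed
    then show ?thesis by (simp add: vec_eq_iff)
  qed
  have FP: "matrix f ** P = P ** M"
  proof -
    have "(matrix f ** P) $ i $ j = (P ** M) $ i $ j" for i j
    proof -
      have "(matrix f ** P) $ i $ j = (matrix f *v g j) $ i"
        by (simp add: matrix_matrix_mult_def matrix_vector_mult_def P_def)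
      also have "\<dots> = f (g j) $ i" using lf by (simp add: matrix_works)
      also have "\<dots> = (\<Sum>k\<in>UNIV. representation B (f (g j)) (g k) * (g k) $ i)"
        by (rule rep_sum_comp[OF indB spB g, symmetric])
      also have "\<dots> = (P ** M) $ i $ j"
        by (simp add: matrix_matrix_mult_def P_def M_def mult.commute)
      finally show ?thesis .
    qed
    then show ?thesis by (simp add: vec_eq_iff)
  qed
  have "det P * det Q = 1" using PQ by (metis det_I det_mul)
  then have dP: "det P \<noteq> 0" by auto
  have "det (matrix f) * det P = det P * det M"
    using FP by (metis det_mul)
  then have dfM: "det (matrix f) = det M" using dP by simp
  have "det M = (\<Sum>q | q permutes (UNIV::'n set). of_int (sign q) * (\<Prod>i\<in>UNIV. M $ i $ q i))"
    by (simp add: det_def)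
  also have "\<dots> = (\<Sum>p | p permutes B. of_int (sign p) * (\<Prod>b\<in>B. representation B (f (p b)) b))"
  proof (rule sum.reindex_bij_witness[where i = "map_permutation B (inv_into UNIV g)" and j = "map_permutation UNIV g"])
    fix q assume q: "q \<in> {q. q permutes (UNIV::'n set)}"
    show "map_permutation B (inv_into UNIV g) (map_permutation UNIV g q) = q"
      by (rule map_permutation_compose_inv) (use g q in \<open>auto simp: bij_betw_inv_into_left\<close>)
    show "map_permutation UNIV g q \<in> {p. p permutes B}"
      using map_permutation_permutes[OF g] q by auto
    have sg: "sign (map_permutation UNIV g q) = sign q"
      using sign_map_permutation[of g UNIV q] injg q by simp
    have "(\<Prod>b\<in>B. representation B (f (map_permutation UNIV g q b)) b)
        = (\<Prod>i\<in>UNIV. representation B (f (map_permutation UNIV g q (g i))) (g i))"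
      using g by (simp add: prod.reindex_bij_betw[symmetric])
    also have "\<dots> = (\<Prod>i\<in>UNIV. M $ i $ q i)"
      using injg by (simp add: map_permutation_apply M_def)
    finally show "of_int (sign (map_permutation UNIV g q)) *
          (\<Prod>b\<in>B. representation B (f (map_permutation UNIV g q b)) b) =
          of_int (sign q) * (\<Prod>i\<in>UNIV. M $ i $ q i)" using sg by simp
  next
    fix p assume p: "p \<in> {p. p permutes B}"
    have gi: "bij_betw (inv_into UNIV g) B UNIV" using g by (rule bij_betw_inv_into)
    show "map_permutation UNIV g (map_permutation B (inv_into UNIV g) p) = p"
      by (rule map_permutation_compose_inv) (use g gi p in \<open>auto simp: bij_betw_inv_into_right\<close>)
    show "map_permutation B (inv_into UNIV g) p \<in> {q. q permutes (UNIV::'n set)}"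
      using map_permutation_permutes[OF gi] p by auto
  qed
  finally show ?thesis using dfM by simp
qed



lemma independent_Un_trivial_inter:
  fixes A C :: "(real^'n::finite) set"
  assumes "finite C" "independent A" "independent C"
    and "\<And>x. x \<in> span A \<Longrightarrow> x \<in> span C \<Longrightarrow> x = 0"
  shows "independent (A \<union> C)"
  using assms(1,3,4)
proof (induction C rule: finite_induct)
  case empty then show ?case using assms(2) by simp
next
  case (insert c C)
  have iC: "independent C" using insert.prems(1) by (meson dependent_mono subset_insertI)
  have "independent (A \<union> C)"
    using insert.IH[OF iC] insert.prems(2) span_mono[of C "insert c C"] by blast
  moreover have "c \<notin> span (A \<union> C)"
  proof
    assume "c \<in> span (A \<union> C)"
    then obtain x y where xy: "x \<in> span A" "y \<in> span C" "c = x + y"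
      by (auto simp: span_Un)
    have "x = c - y" using xy by simp
    moreover have "y \<in> span (insert c C)"
      using xy(2) span_mono[of C "insert c C"] by blast
    then have "c - y \<in> span (insert c C)"
      using span_diff[OF span_base[of c "insert c C"]] by simp
    ultimately have "x = 0" using insert.prems(2) xy(1) by metis
    then have "c \<in> span C" using xy by simp
    then show False using insert.prems(1) insert.hyps(2) by (simp add: independent_insert)
  qed
  ultimately show ?case by (simp add: independent_insertI)
qed

lemma orth_basis_union:
  fixes C BU :: "(real^'n::finite) set"
  assumes fC: "finite C" and iC: "independent C" and iBU: "independent BU"
    and spBU: "span BU = {v. \<forall>c\<in>C. v \<bullet> c = 0}"
  shows "BU \<inter> C = {}" "independent (BU \<union> C)" "span (BU \<union> C) = UNIV"
proof -
  let ?U = "{v. \<forall>c\<in>C. v \<bullet> c = 0}"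
  have orth: "x = 0" if "x \<in> ?U" "x \<in> span C" for x
  proof -
    have "orthogonal x x"
      using that by (intro orthogonal_to_span[of x C x]) (auto simp: orthogonal_def)
    then show ?thesis by (simp add: orthogonal_def)
  qed
  show "BU \<inter> C = {}"
  proof (rule ccontr)
    assume "BU \<inter> C \<noteq> {}"
    then obtain c where c: "c \<in> BU" "c \<in> C" by auto
    then have "c \<in> ?U" using spBU span_base by blast
    then have "c = 0" using orth c span_base by blast
    then show False using iC c dependent_zero by blast
  qed
  show "independent (BU \<union> C)"
    using fC iBU iC orth spBU by (intro independent_Un_trivial_inter) auto
  show "span (BU \<union> C) = UNIV"
  proof (rule set_eqI, rule iffI)
    fix x :: "real^'n"
    obtain y z where yz: "y \<in> span C" "\<And>w. w \<in> span C \<Longrightarrow> orthogonal z w" "x = y + z"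
      using orthogonal_subspace_decomp_exists[of C x] by blast
    have "z \<in> span BU" using yz(2) span_base[of _ C] by (auto simp: spBU orthogonal_def)
    then have "x = z + y \<and> z \<in> span BU \<and> y \<in> span C" using yz(1,3) by simp
    then show "x \<in> span (BU \<union> C)" unfolding span_Un by blast
  qed auto
qed



lemma det_split:
  fixes BU C :: "(real^'n::finite) set" and f q :: "real^'n \<Rightarrow> real^'n" and \<mu> :: "real^'n \<Rightarrow> real"
  assumes iB: "independent (BU \<union> C)" and spB: "span (BU \<union> C) = UNIV" and disj: "BU \<inter> C = {}"
    and lf: "linear f" and fU: "\<And>x. x \<in> span BU \<Longrightarrow> f x \<in> span BU"
    and q: "q permutes C" and fq: "\<And>c. c \<in> C \<Longrightarrow> f (q c) = \<mu> c *\<^sub>R c"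
  shows "det (matrix f) = of_int (sign q) * (\<Prod>c\<in>C. \<mu> c) *
     (\<Sum>p | p permutes BU. of_int (sign p) * (\<Prod>b\<in>BU. representation BU (f (p b)) b))"
proof -
  define B where "B = BU \<union> C"
  have finB: "finite B" using basis_card[OF iB spB] B_def by simp
  have fBU: "finite BU" and fC: "finite C" using finB B_def by auto
  have iBU: "independent BU" using iB by (meson dependent_mono sup_ge1)
  have iC: "independent C" using iB by (meson dependent_mono sup_ge2)
  define F where "F p = of_int (sign p) * (\<Prod>b\<in>B. representation B (f (p b)) b)" for p
  have repU: "representation B x = representation BU x" if "x \<in> span BU" for x
    using representation_extend[OF iB that] B_def by auto
  have repC: "representation B (r *\<^sub>R c) b = (if b = c then r else 0)" if "c \<in> C" for c b r
  proof -
    have "c \<in> B" using that B_def by auto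
    then have "representation B (r *\<^sub>R c) = (\<lambda>b. r * representation B c b)"
      using representation_scale[OF iB[folded B_def]] span_base by blast
    then show ?thesis using representation_basis[OF iB[folded B_def] \<open>c \<in> B\<close>] by simp
  qed
  have qperm: "q permutes B" using q permutes_subset B_def by blast
  have qC: "q c \<in> C" if "c \<in> C" for c using q that by (simp add: permutes_in_image)
  have qU: "q b = b" if "b \<notin> C" for b using q that by (simp add: permutes_not_in)
  have vanish: "F p = 0" if p: "p permutes B" and nin: "p \<notin> (\<lambda>p1. p1 \<circ> q) ` {p1. p1 permutes BU}" for p
  proof (rule ccontr)
    assume nz: "F p \<noteq> 0"
    then have nzb: "representation B (f (p b)) b \<noteq> 0" if "b \<in> B" for b
      using that finB by (auto simp: F_def)
    have pc: "p c = q c" if c: "c \<in> C" for c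
    proof -
      have "p c \<in> B" using p c B_def permutes_in_image[OF p, of c] by auto
      show ?thesis
      proof (cases "p c \<in> BU")
        case True
        then have "f (p c) \<in> span BU" using fU span_base by blast
        then have "representation B (f (p c)) c = representation BU (f (p c)) c" using repU by simp
        also have "\<dots> = 0" using representation_ne_zero[of BU "f (p c)" c] c disj by blast
        finally show ?thesis using nzb[of c] c B_def by auto
      next
        case False
        then have pcC: "p c \<in> C" using \<open>p c \<in> B\<close> B_def by auto
        obtain d where d: "d \<in> C" "q d = p c"
          using pcC q by (metis permutes_inverses(1) permutes_in_image permutes_inv)
        have "representation B (f (p c)) c = (if c = d then \<mu> d else 0)"
          using fq[OF d(1)] d repC[OF d(1)] by simp
        then have "c = d" using nzb[of c] c B_def by (auto split: if_splits)
        then show ?thesis using d by simp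
      qed
    qed
    define p1 where "p1 = p \<circ> inv q"
    have p1B: "p1 permutes B" using p qperm by (simp add: p1_def permutes_compose permutes_inv)
    have p1C: "p1 c = c" if "c \<in> C" for c
    proof -
      have "inv q c \<in> C" using that q by (simp add: permutes_in_image permutes_inv)
      then show ?thesis using pc[of "inv q c"] q by (simp add: p1_def permutes_inverses(1))
    qed
    have "p1 permutes BU"
      unfolding permutes_def
    proof (intro conjI allI impI)
      fix x assume "x \<notin> BU"
      then show "p1 x = x" using p1B p1C B_def by (cases "x \<in> C") (auto simp: permutes_not_in)
    next
      fix y show "\<exists>!x. p1 x = y" using p1B by (simp add: permutes_def)
    qed
    moreover have "p = p1 \<circ> q" using permutes_inv_o(2)[OF q] by (simp add: p1_def comp_assoc)
    ultimately show False using nin by blast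
  qed
  have injq: "inj_on (\<lambda>p1. p1 \<circ> q) {p1. p1 permutes BU}"
  proof (rule inj_onI)
    fix p1 p2 assume "p1 \<circ> q = p2 \<circ> q"
    then have "p1 \<circ> q \<circ> inv q = p2 \<circ> q \<circ> inv q" by simp
    then show "p1 = p2" using permutes_inv_o(1)[OF q] by (simp add: comp_assoc)
  qed
  have sub: "(\<lambda>p1. p1 \<circ> q) ` {p1. p1 permutes BU} \<subseteq> {p. p permutes B}"
    using qperm permutes_subset[of _ BU B] B_def by (auto intro: permutes_compose)
  have "det (matrix f) = (\<Sum>p | p permutes B. F p)"
    unfolding F_def B_def by (rule det_basis_formula[OF iB spB lf])
  also have "\<dots> = (\<Sum>p \<in> (\<lambda>p1. p1 \<circ> q) ` {p1. p1 permutes BU}. F p)"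
    using sub vanish finB by (intro sum.mono_neutral_right) (auto simp: finite_permutations)
  also have "\<dots> = (\<Sum>p1 | p1 permutes BU. F (p1 \<circ> q))"
    using injq by (simp add: sum.reindex)
  also have "\<dots> = (\<Sum>p1 | p1 permutes BU. of_int (sign q) * (\<Prod>c\<in>C. \<mu> c) *
        (of_int (sign p1) * (\<Prod>b\<in>BU. representation BU (f (p1 b)) b)))"
  proof (rule sum.cong[OF refl])
    fix p1 assume "p1 \<in> {p1. p1 permutes BU}"
    then have p1: "p1 permutes BU" by simp
    have sgn: "sign (p1 \<circ> q) = sign p1 * sign q"
      using p1 q fBU fC by (intro sign_compose) (auto intro: permutes_imp_permutation)
    have "(\<Prod>b\<in>B. representation B (f ((p1 \<circ> q) b)) b)
        = (\<Prod>b\<in>BU. representation B (f ((p1 \<circ> q) b)) b) * (\<Prod>b\<in>C. representation B (f ((p1 \<circ> q) b)) b)"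
      unfolding B_def using fBU fC disj by (rule prod.union_disjoint)
    also have "(\<Prod>b\<in>C. representation B (f ((p1 \<circ> q) b)) b) = (\<Prod>c\<in>C. \<mu> c)"
    proof (rule prod.cong[OF refl])
      fix c assume c: "c \<in> C"
      have "q c \<notin> BU" using qC[OF c] disj by auto
      then have "p1 (q c) = q c" using p1 by (simp add: permutes_not_in)
      then show "representation B (f ((p1 \<circ> q) c)) c = \<mu> c" using fq[OF c] repC[OF c] by simp
    qed
    also have "(\<Prod>b\<in>BU. representation B (f ((p1 \<circ> q) b)) b) = (\<Prod>b\<in>BU. representation BU (f (p1 b)) b)"
    proof (rule prod.cong[OF refl])
      fix b assume b: "b \<in> BU"
      have "q b = b" using b disj qU by auto
      moreover have "p1 b \<in> BU" using p1 b by (simp add: permutes_in_image)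
      then have "f (p1 b) \<in> span BU" using fU span_base by blast
      ultimately show "representation B (f ((p1 \<circ> q) b)) b = representation BU (f (p1 b)) b"
        using repU by simp
    qed
    finally show "F (p1 \<circ> q) = of_int (sign q) * (\<Prod>c\<in>C. \<mu> c) *
        (of_int (sign p1) * (\<Prod>b\<in>BU. representation BU (f (p1 b)) b))"
      by (simp add: F_def sgn)
  qed
  also have "\<dots> = of_int (sign q) * (\<Prod>c\<in>C. \<mu> c) *
     (\<Sum>p | p permutes BU. of_int (sign p) * (\<Prod>b\<in>BU. representation BU (f (p b)) b))"
    by (simp add: sum_distrib_left)
  finally show ?thesis .
qed



definition rv :: "real^'n::finite \<Rightarrow> real^'n \<Rightarrow> real^'n" where
  "rv b x = x - (2 * (x \<bullet> b)) *\<^sub>R b"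

lemma sref_rv: "sref a i = rv (a i)"
  by (auto simp: fun_eq_iff sref_def rv_def)

lemma orth_conj:
  assumes "orthogonal_transformation w"
  shows "w (rv b x) = rv (w b) (w x)"
proof -
  have lw: "linear w" using assms orthogonal_transformation by blast
  have "w x \<bullet> w b = x \<bullet> b" using assms orthogonal_transformation_def by blast
  then show ?thesis using lw by (simp add: rv_def linear_diff linear_scale)
qed

lemma rv_neg[simp]: "rv (- b) = rv b"
  by (auto simp: fun_eq_iff rv_def)

lemma word_map_Nil[simp]: "word_map a [] = id"
  by (simp add: word_map_def)

lemma word_map_Cons[simp]: "word_map a (i # ws) = sref a i \<circ> word_map a ws"
  by (simp add: word_map_def)

lemma word_map_append: "word_map a (xs @ ys) = word_map a xs \<circ> word_map a ys"
  by (induction xs) auto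

lemma coxlen_le: "coxlen a (word_map a ws) \<le> length ws"
  unfolding coxlen_def by (rule Least_le) auto

lemma coxlen_ex: "\<exists>ws. length ws = coxlen a (word_map a xs) \<and> word_map a ws = word_map a xs"
  unfolding coxlen_def by (rule LeastI_ex) auto

lemma coxlen_comp: "coxlen a (word_map a xs \<circ> word_map a ys) \<le> coxlen a (word_map a xs) + coxlen a (word_map a ys)"
proof -
  obtain xs' where x: "length xs' = coxlen a (word_map a xs)" "word_map a xs' = word_map a xs"
    using coxlen_ex by blast
  obtain ys' where y: "length ys' = coxlen a (word_map a ys)" "word_map a ys' = word_map a ys"
    using coxlen_ex by blast
  have "word_map a xs \<circ> word_map a ys = word_map a (xs' @ ys')" using x y by (simp add: word_map_append)
  then show ?thesis using coxlen_le[of a "xs' @ ys'"] x y by simp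
qed

lemma coxlen_0: "coxlen a (word_map a ws) = 0 \<Longrightarrow> word_map a ws = id"
  using coxlen_ex[of a ws] by auto

lemma coxlen_sref: "coxlen a (sref a i) \<le> 1"
  using coxlen_le[of a "[i]"] by simp

context fixes a :: "'n::finite \<Rightarrow> real^'n"
  assumes unit: "\<And>i. norm (a i) = 1"
begin

lemma aa1: "a i \<bullet> a i = 1"
  using unit[of i] by (simp add: norm_eq_1)

lemma sref_sref[simp]: "sref a i (sref a i x) = x"
  by (simp add: sref_def inner_diff_left algebra_simps aa1)

lemma sref_comp_sref[simp]: "sref a i \<circ> sref a i = id"
  by (auto simp: fun_eq_iff)

lemma sref_comp_sref'[simp]: "sref a i \<circ> (sref a i \<circ> f) = f"
  by (auto simp: fun_eq_iff)

lemma sref_inner: "sref a i x \<bullet> sref a i y = x \<bullet> y"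
  by (simp add: sref_def inner_diff_left inner_diff_right algebra_simps aa1 inner_commute)

lemma linear_sref: "linear (sref a i)"
  by (rule linearI) (auto simp: sref_def inner_add_left algebra_simps scaleR_add_left)

lemma orth_sref: "orthogonal_transformation (sref a i)"
  unfolding orthogonal_transformation by (simp add: linear_sref sref_inner norm_eq_sqrt_inner)

lemma orth_word: "orthogonal_transformation (word_map a ws)"
  by (induction ws) (auto simp: orth_sref orthogonal_transformation_compose simp del: o_apply intro: orthogonal_transformation_compose)

lemma linear_word: "linear (word_map a ws)"
  using orth_word orthogonal_transformation by blast

lemma word_rev: "word_map a (rev ws) \<circ> word_map a ws = id"
  by (induction ws) (auto simp: word_map_append comp_assoc)

lemma word_rev': "word_map a ws \<circ> word_map a (rev ws) = id"
  using word_rev[of "rev ws"] by simp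

lemma inv_word: "inv (word_map a ws) = word_map a (rev ws)"
  using word_rev word_rev' by (metis inv_unique_comp)

lemma coxlen_rev: "coxlen a (word_map a (rev ws)) = coxlen a (word_map a ws)"
proof -
  have *: "coxlen a (word_map a (rev xs)) \<le> coxlen a (word_map a xs)" for xs
  proof -
    obtain ys where y: "length ys = coxlen a (word_map a xs)" "word_map a ys = word_map a xs"
      using coxlen_ex by blast
    have "word_map a (rev xs) = word_map a (rev ys)" using y inv_word by metis
    then show ?thesis using coxlen_le[of a "rev ys"] y by simp
  qed
  show ?thesis using *[of ws] *[of "rev ws"] by simp
qed

end


context fixes a :: "'n::finite \<Rightarrow> real^'n"
  assumes cg: "finite_coxeter_geom a"
begin

lemma unit: "norm (a i) = 1" using cg by (simp add: finite_coxeter_geom_def)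
lemma inja: "inj a" using cg by (simp add: finite_coxeter_geom_def)
lemma inda: "independent (range a)" using cg by (simp add: finite_coxeter_geom_def)
lemma angle: "i \<noteq> j \<Longrightarrow> a i \<bullet> a j = - cos (pi / real (m_ord a i j))"
  using cg by (simp add: finite_coxeter_geom_def)

lemma aa1': "a i \<bullet> a i = 1" using unit[of i] by (simp add: norm_eq_1)

lemma linear_sref': "linear (sref a i)" by (rule linear_sref) (rule unit)
lemma linear_word': "linear (word_map a ws)" by (rule linear_word) (rule unit)
lemma orth_word': "orthogonal_transformation (word_map a ws)" by (rule orth_word) (rule unit)
lemma sref_sref'[simp]: "sref a i (sref a i x) = x" by (rule sref_sref) (rule unit)
lemma sref_comp_sref1[simp]: "sref a i \<circ> sref a i = id" by (rule sref_comp_sref) (rule unit)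
lemma sref_comp_sref2[simp]: "sref a i \<circ> (sref a i \<circ> f) = f" by (rule sref_comp_sref') (rule unit)
lemma inv_word': "inv (word_map a ws) = word_map a (rev ws)" by (rule inv_word) (rule unit)
lemma coxlen_rev': "coxlen a (word_map a (rev ws)) = coxlen a (word_map a ws)" by (rule coxlen_rev) (rule unit)

lemma a_nz: "a i \<noteq> 0" using unit[of i] by auto

lemma sref_fix_iff: "sref a i v = v \<longleftrightarrow> v \<bullet> a i = 0"
  using a_nz[of i] by (auto simp: sref_def)

lemma FixW_char: "FixW a J = {v. \<forall>c\<in>a ` J. v \<bullet> c = 0}"
proof (rule set_eqI, rule iffI)
  fix v assume v: "v \<in> FixW a J"
  show "v \<in> {v. \<forall>c\<in>a ` J. v \<bullet> c = 0}"
  proof (clarsimp)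
    fix j assume "j \<in> J"
    then have "sref a j \<in> parW a J" unfolding parW_def by (auto intro!: exI[of _ "[j]"])
    then have "sref a j v = v" using v by (simp add: FixW_def)
    then show "v \<bullet> a j = 0" by (simp add: sref_fix_iff)
  qed
next
  fix v assume v: "v \<in> {v. \<forall>c\<in>a ` J. v \<bullet> c = 0}"
  have "word_map a ws v = v" if "set ws \<subseteq> J" for ws
    using that by (induction ws) (use v in \<open>auto simp: sref_fix_iff\<close>)
  then show "v \<in> FixW a J" by (auto simp: FixW_def parW_def)
qed

lemma subspace_FixW: "subspace (FixW a J)"
proof -
  have "FixW a J = {y. \<forall>x\<in>a ` J. orthogonal x y}"
    by (auto simp: FixW_char orthogonal_def inner_commute)
  then show ?thesis using subspace_orthogonal_to_vectors[of "a ` J"] by simp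
qed

lemma ind_aJ: "independent (a ` J)"
  using inda dependent_mono[of "a ` J" "range a"] by auto

lemma fin_aJ: "finite (a ` J)" by simp

lemma basis_FixW: "\<exists>B. independent B \<and> B \<subseteq> FixW a J \<and> span B = FixW a J"
  using basis_subspace_exists[OF subspace_FixW] by metis

lemma det_sref: "det (matrix (sref a i)) = -1"
proof -
  obtain BU where BU: "independent BU" "BU \<subseteq> FixW a {i}" "span BU = FixW a {i}"
    using basis_FixW by blast
  have sp: "span BU = {v. \<forall>c\<in>{a i}. v \<bullet> c = 0}" using BU FixW_char by auto
  note ob = orth_basis_union[of "{a i}" BU, OF _ _ BU(1) sp] 
  have o1: "BU \<inter> {a i} = {}" and o2: "independent (BU \<union> {a i})" and o3: "span (BU \<union> {a i}) = UNIV"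
    using ob ind_aJ[of "{i}"] by auto
  define D where "D f = (\<Sum>p | p permutes BU. of_int (sign p) * (\<Prod>b\<in>BU. representation BU (f (p b)) b))" for f :: "real^'n \<Rightarrow> real^'n"
  have fixU: "sref a i x = x" if "x \<in> span BU" for x using that sp by (simp add: sref_fix_iff)
  have "det (matrix (sref a i)) = of_int (sign (id :: real^'n \<Rightarrow> real^'n)) * (\<Prod>c\<in>{a i}. -1) * D (sref a i)"
    unfolding D_def
    apply (rule det_split[OF o2 o3 o1, where q=id and \<mu>="\<lambda>c. -1"]) 
    using linear_sref' apply blast
    using fixU apply simp
      apply simp
    apply (auto simp: sref_def aa1' scaleR_conv_of_real)
    done
  moreover have "det (matrix (id :: real^'n \<Rightarrow> real^'n)) = of_int (sign (id :: real^'n \<Rightarrow> real^'n)) * (\<Prod>c\<in>{a i}. 1) * D id"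
    unfolding D_def
    by (rule det_split[OF o2 o3 o1, where f=id and q=id and \<mu>="\<lambda>c. 1"]) (auto simp: linear_id)
  moreover have "D (sref a i) = D id"
    unfolding D_def
  proof (rule sum.cong[OF refl])
    fix p assume "p \<in> {p. p permutes BU}"
    then have "p b \<in> BU" if "b \<in> BU" for b using that by (simp add: permutes_in_image)
    then show "of_int (sign p) * (\<Prod>b\<in>BU. representation BU (sref a i (p b)) b) =
        of_int (sign p) * (\<Prod>b\<in>BU. representation BU (id (p b)) b)"
      using fixU span_base by (metis (no_types, lifting) id_apply prod.cong)
  qed
  ultimately show ?thesis by simp
qed

lemma det_word: "det (matrix (word_map a ws)) = (-1) ^ length ws"
proof (induction ws)
  case Nil then show ?case using matrix_id by (simp add: id_def)
next
  case (Cons i ws)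
  have "matrix (word_map a (i # ws)) = matrix (sref a i) ** matrix (word_map a ws)"
    by (simp add: matrix_compose linear_sref' linear_word')
  then have "det (matrix (word_map a (i # ws))) = det (matrix (sref a i)) * det (matrix (word_map a ws))"
    by (simp only: det_mul)
  then show ?case using Cons by (simp add: det_sref del: word_map_Cons)
qed

lemma parity: "coxlen a (word_map a ws \<circ> sref a s) \<noteq> coxlen a (word_map a ws)"
proof
  assume eq: "coxlen a (word_map a ws \<circ> sref a s) = coxlen a (word_map a ws)"
  obtain xs where x: "length xs = coxlen a (word_map a ws)" "word_map a xs = word_map a ws"
    using coxlen_ex by blast
  have ws': "word_map a ws \<circ> sref a s = word_map a (ws @ [s])" by (simp add: word_map_append)
  obtain ys where y: "length ys = coxlen a (word_map a (ws @ [s]))" "word_map a ys = word_map a (ws @ [s])"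
    using coxlen_ex by blast
  have "length ys = length xs" using x y eq ws' by simp
  moreover have "det (matrix (word_map a ys)) = (-1) ^ (length ws + 1)"
    using y det_word[of "ws @ [s]"] by simp
  moreover have "det (matrix (word_map a xs)) = (-1) ^ length ws"
    using x det_word[of ws] by simp
  ultimately have "(-1::real) ^ length xs = - ((-1) ^ length xs)"
    by (simp add: det_word)
  then show False by (cases "even (length xs)") auto
qed

end


fun altw :: "'n \<Rightarrow> 'n \<Rightarrow> nat \<Rightarrow> 'n list" where
  "altw s t 0 = []"
| "altw s t (Suc k) = (if even k then t else s) # altw s t k"

definition red :: "('n::finite \<Rightarrow> real^'n) \<Rightarrow> 'n list \<Rightarrow> bool" where
  "red a ws \<longleftrightarrow> coxlen a (word_map a ws) = length ws"

lemma red_suffix: "red a (xs @ ys) \<Longrightarrow> red a ys"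
proof -
  assume r: "red a (xs @ ys)"
  have "coxlen a (word_map a (xs @ ys)) \<le> coxlen a (word_map a xs) + coxlen a (word_map a ys)"
    using coxlen_comp by (simp add: word_map_append)
  moreover have "coxlen a (word_map a xs) \<le> length xs" "coxlen a (word_map a ys) \<le> length ys"
    by (rule coxlen_le)+
  ultimately show "red a ys" using r by (simp add: red_def)
qed

lemma altw_suffix: "k \<le> k' \<Longrightarrow> \<exists>pre. altw s t k' = pre @ altw s t k"
proof (induction k')
  case 0 then show ?case by simp
next
  case (Suc k')
  show ?case
  proof (cases "k = Suc k'")
    case True then show ?thesis by (intro exI[of _ "[]"]) simp
  next
    case False
    then obtain pre where "altw s t k' = pre @ altw s t k" using Suc by auto
    then show ?thesis by (intro exI[of _ "(if even k' then t else s) # pre"]) simp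
  qed
qed

context fixes a :: "'n::finite \<Rightarrow> real^'n"
  assumes cg: "finite_coxeter_geom a"
begin

lemma red_no_double: "\<not> red a (y # y # zs)"
proof
  assume "red a (y # y # zs)"
  moreover have "word_map a (y # y # zs) = word_map a zs"
    by (simp add: sref_comp_sref2[OF cg])
  ultimately show False using coxlen_le[of a zs] by (simp add: red_def)
qed

lemma alt_shape:
  assumes "s \<noteq> t" shows "set ys \<subseteq> {s, t} \<Longrightarrow> red a (ys @ [s]) \<Longrightarrow> ys = altw s t (length ys)"
proof (induction ys)
  case Nil then show ?case by simp
next
  case (Cons y ys)
  have r: "red a (ys @ [s])" using Cons.prems(2) red_suffix[of a "[y]" "ys @ [s]"] by simp
  have ys: "ys = altw s t (length ys)" using Cons.IH Cons.prems(1) r by simp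
  have y: "y = s \<or> y = t" using Cons.prems(1) by simp
  have red2: "red a (y # ys @ [s])" using Cons.prems(2) by simp
  show ?case
  proof (cases "length ys")
    case 0
    then have "ys = []" by simp
    then have "y \<noteq> s" using red_no_double[of s "[]"] red2 by auto
    then show ?thesis using y \<open>ys = []\<close> by simp
  next
    case (Suc k)
    define z where "z = (if even k then t else s)"
    have yz: "ys = z # altw s t k" using ys Suc by (simp add: z_def)
    have "y \<noteq> z"
    proof
      assume "y = z"
      then have "red a (z # z # (altw s t k @ [s]))" using red2 yz by simp
      then show False using red_no_double by blast
    qed
    then have "y = (if even (Suc k) then t else s)" using y assms by (auto simp: z_def)
    then show ?thesis using ys Suc by simp
  qed
qed

end


definition ff :: "nat \<Rightarrow> nat \<Rightarrow> real" where
  "ff m k = sin (real k * (pi / real m)) / sin (pi / real m)"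

lemma sin_rec: "sin (real (k + 2) * x) = 2 * cos x * sin (real (k + 1) * x) - sin (real k * x)"
proof -
  define y where "y = real (k + 1) * x"
  have 1: "real (k + 2) * x = y + x" by (simp add: y_def algebra_simps)
  have 2: "real k * x = y - x" by (simp add: y_def algebra_simps)
  have 3: "real (k + 1) * x = y" by (simp add: y_def)
  show ?thesis unfolding 1 2 3 by (simp add: sin_add sin_diff)
qed

lemma ff_rec: "ff m (k + 2) = 2 * cos (pi / real m) * ff m (k + 1) - ff m k"
  unfolding ff_def sin_rec by (simp add: diff_divide_distrib)

lemma sin_pos: "2 \<le> m \<Longrightarrow> sin (pi / real m) > 0"
  by (rule sin_gt_zero) (auto simp: divide_less_eq)

lemma ff_0: "ff m 0 = 0" by (simp add: ff_def)
lemma ff_1: "2 \<le> m \<Longrightarrow> ff m 1 = 1" using sin_pos[of m] by (simp add: ff_def)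
lemma ff_m: "2 \<le> m \<Longrightarrow> ff m m = 0" by (simp add: ff_def)
lemma ff_m1: "2 \<le> m \<Longrightarrow> ff m (Suc m) = -1"
proof -
  assume m: "2 \<le> m"
  have "real (Suc m) * (pi / real m) = pi / real m + pi" using m by (simp add: field_simps)
  then show ?thesis using sin_pos[OF m] by (simp add: ff_def sin_periodic_pi)
qed
lemma ff_nonneg: "2 \<le> m \<Longrightarrow> k \<le> m \<Longrightarrow> ff m k \<ge> 0"
proof -
  assume m: "2 \<le> m" and k: "k \<le> m"
  have "real k * (pi / real m) \<le> pi" using m k by (simp add: field_simps)
  then have "sin (real k * (pi / real m)) \<ge> 0" by (intro sin_ge_zero) auto
  then show ?thesis using sin_pos[OF m] by (simp add: ff_def)
qed

lemma length_altw[simp]: "length (altw s t k) = k" by (induction k) auto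

context fixes a :: "'n::finite \<Rightarrow> real^'n"
  assumes cg: "finite_coxeter_geom a"
begin

lemma m_ge2: assumes st: "s \<noteq> t" shows "2 \<le> m_ord a s t"
proof (rule ccontr)
  assume "\<not> 2 \<le> m_ord a s t"
  then have "m_ord a s t = 0 \<or> m_ord a s t = 1" by auto
  then show False
  proof
    assume "m_ord a s t = 0"
    then have ip: "a s \<bullet> a t = -1" using angle[OF cg st] by simp
    have "(a s + a t) \<bullet> (a s + a t) = 0"
      using ip aa1'[OF cg, of s] aa1'[OF cg, of t] by (simp add: inner_add_left inner_add_right inner_commute)
    then have "a t = - a s" by (simp add: add_eq_0_iff2)
    moreover have "independent {a t, a s}" using ind_aJ[OF cg, of "{t, s}"] by simp
    moreover have "a t \<noteq> a s" using inja[OF cg] st by (auto dest: injD)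
    ultimately have "a t \<notin> span {a s}" by (simp add: independent_insert)
    moreover have "- a s \<in> span {a s}" by (simp add: span_neg span_base)
    ultimately show False using \<open>a t = - a s\<close> by simp
  next
    assume "m_ord a s t = 1"
    then have ip: "a s \<bullet> a t = 1" using angle[OF cg st] by simp
    have "(a s - a t) \<bullet> (a s - a t) = 0"
      using ip aa1'[OF cg, of s] aa1'[OF cg, of t] by (simp add: inner_diff_left inner_diff_right inner_commute)
    then have "a s = a t" by simp
    then show False using inja[OF cg] st by (auto dest: injD)
  qed
qed

lemma sref_t2:
  assumes st: "s \<noteq> t"
  shows "sref a t (x *\<^sub>R a s + y *\<^sub>R a t) = x *\<^sub>R a s + (2 * cos (pi / real (m_ord a s t)) * x - y) *\<^sub>R a t"
proof -
  have ip: "a s \<bullet> a t = - cos (pi / real (m_ord a s t))" using angle[OF cg st] .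
  show ?thesis using ip aa1'[OF cg, of t]
    by (simp add: sref_def inner_add_left algebra_simps vec_eq_iff)
qed

lemma sref_s2:
  assumes st: "s \<noteq> t"
  shows "sref a s (x *\<^sub>R a s + y *\<^sub>R a t) = (2 * cos (pi / real (m_ord a s t)) * y - x) *\<^sub>R a s + y *\<^sub>R a t"
proof -
  have ip: "a t \<bullet> a s = - cos (pi / real (m_ord a s t))" using angle[OF cg st] by (simp add: inner_commute)
  show ?thesis using ip aa1'[OF cg, of s]
    by (simp add: sref_def inner_add_left algebra_simps vec_eq_iff)
qed

lemma altw_val:
  assumes st: "s \<noteq> t"
  shows "word_map a (altw s t k) (a s) =
    (if even k then ff (m_ord a s t) (k+1) *\<^sub>R a s + ff (m_ord a s t) k *\<^sub>R a t
     else ff (m_ord a s t) k *\<^sub>R a s + ff (m_ord a s t) (k+1) *\<^sub>R a t)"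
proof (induction k)
  case 0
  have "a s = ff (m_ord a s t) 1 *\<^sub>R a s + ff (m_ord a s t) 0 *\<^sub>R a t"
    using ff_1[OF m_ge2[OF st]] by (simp add: ff_0)
  then show ?case by simp
next
  case (Suc k)
  let ?m = "m_ord a s t"
  have r: "ff ?m (Suc (Suc k)) = 2 * cos (pi / real ?m) * ff ?m (Suc k) - ff ?m k"
    using ff_rec[of ?m k] by (simp add: numeral_2_eq_2)
  show ?case
  proof (cases "even k")
    case True
    then have "word_map a (altw s t (Suc k)) (a s) = sref a t (ff ?m (k+1) *\<^sub>R a s + ff ?m k *\<^sub>R a t)"
      using Suc by simp
    also have "\<dots> = ff ?m (k+1) *\<^sub>R a s + ff ?m (k+2) *\<^sub>R a t"
      by (simp add: sref_t2[OF st] r)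
    finally show ?thesis using True by simp
  next
    case False
    then have "word_map a (altw s t (Suc k)) (a s) = sref a s (ff ?m k *\<^sub>R a s + ff ?m (k+1) *\<^sub>R a t)"
      using Suc by simp
    also have "\<dots> = ff ?m (k+2) *\<^sub>R a s + ff ?m (k+1) *\<^sub>R a t"
      by (simp add: sref_s2[OF st] r)
    finally show ?thesis using False by simp
  qed
qed

lemma altw_m_not_red:
  assumes st: "s \<noteq> t"
  shows "\<not> red a (altw s t (m_ord a s t) @ [s])"
proof
  assume R: "red a (altw s t (m_ord a s t) @ [s])"
  define m where "m = m_ord a s t"
  have m2: "2 \<le> m" using m_ge2[OF st] m_def by simp
  then obtain m' where m': "m = Suc m'" by (cases m) auto
  define x where "x = (if even m' then t else s)"
  have alt: "altw s t m = x # altw s t m'" using m' x_def by simp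
  define u where "u = word_map a (altw s t m)"
  have ux: "u (a s) = - a x"
  proof (cases "even m")
    case True
    then have "odd m'" using m' by simp
    then have "x = s" using x_def by simp
    then show ?thesis using True altw_val[OF st, of m] ff_m[OF m2] ff_m1[OF m2] by (simp add: u_def m_def)
  next
    case False
    then have "even m'" using m' by simp
    then have "x = t" using x_def by simp
    then show ?thesis using False altw_val[OF st, of m] ff_m[OF m2] ff_m1[OF m2] by (simp add: u_def m_def)
  qed
  have conj: "u \<circ> sref a s = sref a x \<circ> u"
  proof
    fix v
    have "u (sref a s v) = u (rv (a s) v)" by (simp add: sref_rv)
    also have "\<dots> = rv (u (a s)) (u v)" using orth_conj[OF orth_word'[OF cg]] u_def by simp
    also have "\<dots> = sref a x (u v)" using ux by (simp add: sref_rv)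
    finally show "(u \<circ> sref a s) v = (sref a x \<circ> u) v" by simp
  qed
  have "word_map a (altw s t m @ [s]) = u \<circ> sref a s" by (simp add: word_map_append u_def)
  also have "\<dots> = sref a x \<circ> (sref a x \<circ> word_map a (altw s t m'))" using conj alt u_def by simp
  also have "\<dots> = word_map a (altw s t m')" by (rule sref_comp_sref2[OF cg])
  finally have "coxlen a (word_map a (altw s t m @ [s])) \<le> m'"
    using coxlen_le[of a "altw s t m'"] by simp
  moreover have "length (altw s t m) = m" by (induction m) auto
  ultimately show False using R m' m_def by (simp add: red_def)
qed

lemma dihedral:
  assumes st: "s \<noteq> t" and ys: "set ys \<subseteq> {s, t}" and R: "red a (ys @ [s])"
  shows "\<exists>c d. 0 \<le> c \<and> 0 \<le> d \<and> word_map a ys (a s) = c *\<^sub>R a s + d *\<^sub>R a t"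
proof -
  define k where "k = length ys"
  define m where "m = m_ord a s t"
  have m2: "2 \<le> m" using m_ge2[OF st] m_def by simp
  have yk: "ys = altw s t k" using alt_shape[OF cg st ys R] k_def by simp
  have km: "k + 1 \<le> m"
  proof (rule ccontr)
    assume "\<not> k + 1 \<le> m"
    then have "m \<le> k" by simp
    then obtain pre where "altw s t k = pre @ altw s t m" using altw_suffix[of m k s t] by blast
    then have "red a (pre @ (altw s t m @ [s]))" using R yk by simp
    then have "red a (altw s t m @ [s])" by (rule red_suffix)
    then show False using altw_m_not_red[OF st] m_def by simp
  qed
  have n1: "ff m k \<ge> 0" "ff m (k+1) \<ge> 0" using ff_nonneg[OF m2] km by auto
  show ?thesis
  proof (cases "even k")
    case True
    then show ?thesis using altw_val[OF st, of k] yk n1 m_def by auto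
  next
    case False
    then show ?thesis using altw_val[OF st, of k] yk n1 m_def by auto
  qed
qed

end


definition pos :: "('n::finite \<Rightarrow> real^'n) \<Rightarrow> real^'n \<Rightarrow> bool" where
  "pos a x \<longleftrightarrow> (\<exists>c. (\<forall>i. 0 \<le> c i) \<and> x = (\<Sum>i\<in>UNIV. c i *\<^sub>R a i))"

lemma pos_a: "pos a (a i)"
proof -
  have "(\<Sum>j\<in>UNIV. (if j = i then 1 else 0) *\<^sub>R a j) = (\<Sum>j\<in>UNIV. if j = i then a j else 0)"
    by (rule sum.cong) auto
  then have "a i = (\<Sum>j\<in>UNIV. (if j = i then 1 else 0) *\<^sub>R a j)" by simp
  then show ?thesis unfolding pos_def by (intro exI[of _ "\<lambda>j. if j = i then 1 else 0"]) auto
qed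

lemma pos_comb:
  assumes "pos a x" "pos a y" "0 \<le> p" "0 \<le> q"
  shows "pos a (p *\<^sub>R x + q *\<^sub>R y)"
proof -
  obtain c where c: "\<forall>i. 0 \<le> c i" "x = (\<Sum>i\<in>UNIV. c i *\<^sub>R a i)" using assms(1) pos_def by blast
  obtain d where d: "\<forall>i. 0 \<le> d i" "y = (\<Sum>i\<in>UNIV. d i *\<^sub>R a i)" using assms(2) pos_def by blast
  show ?thesis unfolding pos_def
  proof (intro exI[of _ "\<lambda>i. p * c i + q * d i"] conjI allI)
    show "0 \<le> p * c i + q * d i" for i using c d assms by simp
    show "p *\<^sub>R x + q *\<^sub>R y = (\<Sum>i\<in>UNIV. (p * c i + q * d i) *\<^sub>R a i)"
      by (simp add: c d scaleR_sum_right sum.distrib scaleR_add_left)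
  qed
qed

context fixes a :: "'n::finite \<Rightarrow> real^'n"
  assumes cg: "finite_coxeter_geom a"
begin

lemma core_aux:
  "\<forall>ws s. coxlen a (word_map a ws) = N \<longrightarrow> coxlen a (word_map a (ws @ [s])) > N \<longrightarrow> pos a (word_map a ws (a s))"
proof (induction N rule: less_induct)
  case (less N)
  show ?case
  proof (intro allI impI)
    fix ws s assume hN: "coxlen a (word_map a ws) = N" and hs: "coxlen a (word_map a (ws @ [s])) > N"
    define w where "w = word_map a ws"
    show "pos a (word_map a ws (a s))"
    proof (cases "N = 0")
      case True
      then have "word_map a ws = id" using coxlen_0 hN by blast
      then show ?thesis by (simp add: pos_a)
    next
      case False
      obtain xs where xs: "length xs = N" "word_map a xs = w" using coxlen_ex[of a ws] hN w_def by auto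
      then obtain xs' t where xt: "xs = xs' @ [t]" using False by (metis length_0_conv rev_exhaust)
      have wt: "word_map a (xs' @ [t]) = w" using xs xt by simp
      have w_t: "word_map a (ws @ [t]) = word_map a xs'"
      proof -
        have "word_map a (ws @ [t]) = w \<circ> sref a t" by (simp add: w_def word_map_append)
        also have "\<dots> = (word_map a xs' \<circ> sref a t) \<circ> sref a t" using wt by (simp add: word_map_append)
        also have "\<dots> = word_map a xs' \<circ> (sref a t \<circ> sref a t)" by (rule comp_assoc)
        also have "\<dots> = word_map a xs'" using sref_comp_sref1[OF cg] by simp
        finally show ?thesis .
      qed
      have lxs': "coxlen a (word_map a xs') = N - 1"
      proof -
        have "coxlen a (word_map a xs') \<le> N - 1" using coxlen_le[of a xs'] xs xt by simp
        moreover have "N \<le> coxlen a (word_map a xs') + 1"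
          using coxlen_comp[of a xs' "[t]"] coxlen_le[of a "[t]"] wt hN w_def
          by (simp add: word_map_append)
        ultimately show ?thesis by simp
      qed
      have "t \<noteq> s" using hs w_t lxs' by auto
      define P where "P = (\<lambda>(v, us). set us \<subseteq> {s, t} \<and> w = word_map a v \<circ> word_map a us \<and>
                                 coxlen a (word_map a v) + length us = N)"
      have P0: "P (xs', [t])" using wt lxs' False by (simp add: P_def word_map_append)
      obtain vu where Pvu: "P vu" and minvu: "\<And>y. P y \<Longrightarrow> (\<lambda>(v, us). coxlen a (word_map a v)) vu \<le> (\<lambda>(v, us). coxlen a (word_map a v)) y"
        using ex_has_least_nat[of P "(xs', [t])" "\<lambda>(v, us). coxlen a (word_map a v)"] P0 by blast
      obtain v us where vu: "vu = (v, us)" by (cases vu)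
      have Pv: "set us \<subseteq> {s, t}" "w = word_map a v \<circ> word_map a us" "coxlen a (word_map a v) + length us = N"
        using Pvu vu by (auto simp: P_def)
      have minv: "coxlen a (word_map a v) \<le> coxlen a (word_map a v')" if "P (v', us')" for v' us'
        using minvu[OF that] vu by simp
      have lv: "coxlen a (word_map a v) < N" using minv[OF P0] lxs' False by simp
      have asc: "coxlen a (word_map a (v @ [x])) > coxlen a (word_map a v)" if x: "x \<in> {s, t}" for x
      proof (rule ccontr)
        assume "\<not> ?thesis"
        moreover have "coxlen a (word_map a (v @ [x])) \<noteq> coxlen a (word_map a v)"
          using parity[OF cg, of v x] by (simp add: word_map_append)
        ultimately have lt: "coxlen a (word_map a (v @ [x])) < coxlen a (word_map a v)" by simp
        have vx: "word_map a v = word_map a (v @ [x]) \<circ> word_map a [x]"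
          using sref_comp_sref1[OF cg, of x] by (simp add: word_map_append comp_assoc)
        have "coxlen a (word_map a v) \<le> coxlen a (word_map a (v @ [x])) + 1"
          using coxlen_comp[of a "v @ [x]" "[x]"] coxlen_le[of a "[x]"] vx by simp
        then have eq: "coxlen a (word_map a (v @ [x])) + 1 = coxlen a (word_map a v)" using lt by simp
        have "P (v @ [x], x # us)"
        proof -
          have "word_map a (v @ [x]) \<circ> word_map a (x # us) = word_map a v \<circ> word_map a us"
            by (simp add: word_map_append comp_assoc sref_comp_sref2[OF cg])
          then show ?thesis using Pv x eq by (auto simp: P_def)
        qed
        then show False using minv lt by fastforce
      qed
      have posv: "pos a (word_map a v (a x))" if "x \<in> {s, t}" for x
        using less[OF lv] asc[OF that] by blast
      have redus: "red a (us @ [s])"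
      proof -
        have "word_map a (ws @ [s]) = word_map a v \<circ> word_map a (us @ [s])"
          using Pv(2) w_def by (simp add: word_map_append comp_assoc)
        then have "coxlen a (word_map a (ws @ [s])) \<le> coxlen a (word_map a v) + coxlen a (word_map a (us @ [s]))"
          using coxlen_comp by metis
        then have "length (us @ [s]) \<le> coxlen a (word_map a (us @ [s]))" using hs Pv(3) by simp
        then show ?thesis using coxlen_le[of a "us @ [s]"] by (simp add: red_def)
      qed
      obtain c d where cd: "0 \<le> c" "0 \<le> d" "word_map a us (a s) = c *\<^sub>R a s + d *\<^sub>R a t"
        using dihedral[OF cg \<open>t \<noteq> s\<close>[symmetric] Pv(1) redus] by blast
      have "word_map a ws (a s) = word_map a v (c *\<^sub>R a s + d *\<^sub>R a t)"
        using Pv(2) w_def cd(3) by (metis comp_apply)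
      also have "\<dots> = c *\<^sub>R word_map a v (a s) + d *\<^sub>R word_map a v (a t)"
        using linear_word'[OF cg] by (simp add: linear_add linear_scale)
      finally show ?thesis using pos_comb[OF posv posv cd(1,2)] by simp
    qed
  qed
qed

lemma core: "coxlen a (word_map a (ws @ [s])) > coxlen a (word_map a ws) \<Longrightarrow> pos a (word_map a ws (a s))"
  using core_aux by blast

end


context fixes a :: "'n::finite \<Rightarrow> real^'n"
  assumes cg: "finite_coxeter_geom a"
begin

lemma word_rev_cg: "word_map a (rev ws) \<circ> word_map a ws = id" by (rule word_rev) (rule unit[OF cg])
lemma word_rev'_cg: "word_map a ws \<circ> word_map a (rev ws) = id" by (rule word_rev') (rule unit[OF cg])

lemma not_pos_neg: "\<not> pos a (- a j)"
proof
  assume "pos a (- a j)"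
  then obtain c where c: "\<forall>i. 0 \<le> c i" "- a j = (\<Sum>i\<in>UNIV. c i *\<^sub>R a i)" using pos_def by blast
  define d where "d i = c i + (if i = j then 1 else 0)" for i
  have "(\<Sum>i\<in>UNIV. d i *\<^sub>R a i) = (\<Sum>i\<in>UNIV. c i *\<^sub>R a i) + (\<Sum>i\<in>UNIV. (if i = j then a i else 0))"
  proof -
    have "(\<Sum>i\<in>UNIV. d i *\<^sub>R a i) = (\<Sum>i\<in>UNIV. c i *\<^sub>R a i + (if i = j then a i else 0))"
      by (rule sum.cong) (auto simp: d_def scaleR_add_left)
    then show ?thesis by (simp only: sum.distrib)
  qed
  also have "\<dots> = 0" using c(2)[symmetric] by simp
  finally have s0: "(\<Sum>i\<in>UNIV. d i *\<^sub>R a i) = 0" .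
  define u where "u v = d (inv a v)" for v
  have "(\<Sum>v\<in>range a. u v *\<^sub>R v) = (\<Sum>i\<in>UNIV. u (a i) *\<^sub>R a i)"
    using inja[OF cg] by (simp add: sum.reindex)
  also have "\<dots> = 0" using s0 inja[OF cg] by (simp add: u_def)
  finally have "u (a j) = 0" using independentD[OF inda[OF cg], of "range a" u "a j"] by simp
  moreover have "u (a j) = d j" using inja[OF cg] by (simp add: u_def)
  moreover have "d j \<ge> 1" using c(1) by (simp add: d_def)
  ultimately show False by simp
qed

lemma rv_eq_sref:
  assumes b: "norm b = 1" and eq: "rv b = sref a j" and pb: "pos a b"
  shows "b = a j"
proof -
  have bb: "b \<bullet> b = 1" using b by (simp add: norm_eq_1)
  have "rv b b = - b" using bb by (simp add: rv_def algebra_simps vec_eq_iff)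
  then have "sref a j b = - b" using eq by simp
  then have "b - (2 * (b \<bullet> a j)) *\<^sub>R a j = - b" by (simp add: sref_def)
  then have bl: "b = (b \<bullet> a j) *\<^sub>R a j" by (simp add: algebra_simps vec_eq_iff)
  define l where "l = b \<bullet> a j"
  have "l * l = 1" using bb bl aa1'[OF cg, of j] l_def
    by (metis inner_scaleR_left inner_scaleR_right mult.assoc mult.right_neutral)
  then have "l = 1 \<or> l = -1" by (metis minus_equation_iff mult_cancel_left2 square_eq_1_iff)
  then show ?thesis
  proof
    assume "l = -1"
    then have "b = - a j" using bl l_def by simp
    then show ?thesis using pb not_pos_neg by simp
  qed (use bl l_def in simp)
qed

end

theorem lemma2p1:
  fixes a :: "'n::finite \<Rightarrow> real^'n" and J :: "'n set" and n :: "real^'n \<Rightarrow> real^'n"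
  assumes "finite_coxeter_geom a"
    and "n \<in> N_J a J"
  shows "real_of_int (sigma_J a J n) = eps n * alpha_J a J n"
proof -
  note cg = assms(1)
  from assms(2) have nX: "n \<in> X_J a J" and conjeq: "(\<lambda>s. inv n \<circ> s \<circ> n) ` (sref a ` J) = sref a ` J"
    by (auto simp: N_J_def)
  from nX have nW: "n \<in> coxW a" and asc: "\<forall>s\<in>J. coxlen a (sref a s \<circ> n) > coxlen a n"
    by (auto simp: X_J_def)
  obtain ws where nws: "n = word_map a ws" using nW by (auto simp: coxW_def)
  define ni where "ni = word_map a (rev ws)"
  have inv_n: "inv n = ni" using inv_word'[OF cg] nws ni_def by simp
  have ni_n: "ni (n x) = x" for x using word_rev_cg[OF cg, of ws] nws ni_def by (metis comp_apply id_apply)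
  have n_ni: "n (ni x) = x" for x using word_rev'_cg[OF cg, of ws] nws ni_def by (metis comp_apply id_apply)
  have orth_ni: "orthogonal_transformation ni" using orth_word'[OF cg] ni_def by simp
  have orth_n: "orthogonal_transformation n" using orth_word'[OF cg] nws by simp
  have lin_n: "linear n" using orth_n orthogonal_transformation by blast
  have posJ: "pos a (ni (a s))" if s: "s \<in> J" for s
  proof -
    have "coxlen a (word_map a (rev ws @ [s])) = coxlen a (sref a s \<circ> n)"
      using coxlen_rev'[OF cg, of "s # ws"] nws by simp
    moreover have "coxlen a (word_map a (rev ws)) = coxlen a n" using coxlen_rev'[OF cg, of ws] nws by simp
    ultimately have "coxlen a (word_map a (rev ws @ [s])) > coxlen a (word_map a (rev ws))"
      using asc s by simp
    then show ?thesis using core[OF cg] ni_def by simp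
  qed
  have conjform: "inv n \<circ> sref a s \<circ> n = rv (ni (a s))" for s
  proof
    fix v
    have "(inv n \<circ> sref a s \<circ> n) v = ni (rv (a s) (n v))" using inv_n by (simp add: sref_rv)
    also have "\<dots> = rv (ni (a s)) (ni (n v))" using orth_conj[OF orth_ni] by simp
    finally show "(inv n \<circ> sref a s \<circ> n) v = rv (ni (a s)) v" using ni_n by simp
  qed
  have exj: "\<exists>j\<in>J. inv n \<circ> sref a s \<circ> n = sref a j" if "s \<in> J" for s
  proof -
    have "inv n \<circ> sref a s \<circ> n \<in> (\<lambda>s. inv n \<circ> s \<circ> n) ` (sref a ` J)" using that by blast
    then show ?thesis using conjeq by auto
  qed
  have key: "ni (a s) = a j" if "s \<in> J" "inv n \<circ> sref a s \<circ> n = sref a j" for s j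
  proof (rule rv_eq_sref[OF cg])
    show "norm (ni (a s)) = 1" using orthogonal_transformation_norm[OF orth_ni] unit[OF cg] by simp
    show "rv (ni (a s)) = sref a j" using that conjform by simp
    show "pos a (ni (a s))" using posJ that by simp
  qed
  define \<pi> where "\<pi> s = (THE j. j \<in> J \<and> inv n \<circ> sref a s \<circ> n = sref a j)" for s
  have \<pi>: "\<pi> s \<in> J \<and> inv n \<circ> sref a s \<circ> n = sref a (\<pi> s)" if s: "s \<in> J" for s
  proof -
    have "\<exists>!j. j \<in> J \<and> inv n \<circ> sref a s \<circ> n = sref a j"
    proof (rule ex_ex1I)
      show "\<exists>j. j \<in> J \<and> inv n \<circ> sref a s \<circ> n = sref a j" using exj[OF s] by blast
    next
      fix j j' assume "j \<in> J \<and> inv n \<circ> sref a s \<circ> n = sref a j" "j' \<in> J \<and> inv n \<circ> sref a s \<circ> n = sref a j'"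
      then have "a j = a j'" using key[OF s] by metis
      then show "j = j'" using inja[OF cg] by (auto dest: injD)
    qed
    then show ?thesis unfolding \<pi>_def by (rule theI')
  qed
  have nipi: "ni (a s) = a (\<pi> s)" if "s \<in> J" for s using key[OF that] \<pi>[OF that] by blast
  have npi: "n (a (\<pi> s)) = a s" if "s \<in> J" for s using nipi[OF that] n_ni by metis
  have sig: "sigma_J a J n = sign_on J \<pi>" by (simp add: sigma_J_def \<pi>_def)
  have injpi: "inj_on \<pi> J"
  proof (rule inj_onI)
    fix s s' assume "s \<in> J" "s' \<in> J" "\<pi> s = \<pi> s'"
    then have "a s = a s'" using npi by metis
    then show "s = s'" using inja[OF cg] by (auto dest: injD)
  qed
  have piJ: "\<pi> ` J \<subseteq> J" using \<pi> by blast
  have bijpi: "bij_betw \<pi> J J" using endo_inj_surj[OF finite piJ injpi] injpi by (simp add: bij_betw_def)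
  define r where "r = restrict_id \<pi> J"
  have r: "r permutes J" unfolding r_def by (rule permutes_restrict_id[OF bijpi])
  have sig2: "sigma_J a J n = sign r" using sig by (simp add: sign_on_def r_def)
  have injaJ: "inj_on a J" using inja[OF cg] inj_on_subset by blast
  have bija: "bij_betw a J (a ` J)" using injaJ by (simp add: bij_betw_def)
  define q where "q = map_permutation J a r"
  have q: "q permutes (a ` J)" unfolding q_def by (rule map_permutation_permutes[OF bija r])
  have sq: "sign q = sign r" unfolding q_def by (rule sign_map_permutation[OF injaJ r finite])
  have qa: "q (a s) = a (\<pi> s)" if "s \<in> J" for s
    using map_permutation_apply[OF injaJ that, of r] that by (simp add: q_def r_def)
  define BU where "BU = (SOME B. independent B \<and> B \<subseteq> FixW a J \<and> span B = FixW a J)"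
  have BU: "independent BU" "BU \<subseteq> FixW a J" "span BU = FixW a J"
    using someI_ex[OF basis_FixW[OF cg, of J]] unfolding BU_def by blast+
  have spBU: "span BU = {v. \<forall>c\<in>a ` J. v \<bullet> c = 0}" using BU(3) FixW_char[OF cg] by simp
  note ob = orth_basis_union[OF fin_aJ[OF cg] ind_aJ[OF cg] BU(1) spBU]
  have fU: "n x \<in> span BU" if "x \<in> span BU" for x
  proof -
    have "n x \<bullet> a s = 0" if s: "s \<in> J" for s
    proof -
      have "n x \<bullet> a s = n x \<bullet> n (a (\<pi> s))" using npi[OF s] by simp
      also have "\<dots> = x \<bullet> a (\<pi> s)" using orth_n by (simp add: orthogonal_transformation_def)
      also have "\<dots> = 0" using \<open>x \<in> span BU\<close> spBU \<pi>[OF s] by auto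
      finally show ?thesis .
    qed
    then show ?thesis using spBU by auto
  qed
  have fq: "n (q c) = (\<lambda>_. 1) c *\<^sub>R c" if "c \<in> a ` J" for c
    using that qa npi by auto
  have D: "det (matrix n) = of_int (sign q) * (\<Prod>c\<in>a ` J. (\<lambda>_. 1) c) *
     (\<Sum>p | p permutes BU. of_int (sign p) * (\<Prod>b\<in>BU. representation BU (n (p b)) b))"
    by (rule det_split[OF ob(2) ob(3) ob(1) lin_n fU q fq])
  have alpha: "alpha_J a J n = (\<Sum>p | p permutes BU. of_int (sign p) * (\<Prod>b\<in>BU. representation BU (n (p b)) b))"
    by (simp add: alpha_J_def det_on_def BU_def Let_def)
  have E: "eps n = real_of_int (sigma_J a J n) * alpha_J a J n"
    using D alpha sq sig2 by (simp add: eps_def)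
  have e2: "eps n * eps n = 1" using det_word[OF cg, of ws] nws by (simp add: eps_def flip: power_add)
  have s2: "real_of_int (sigma_J a J n) * real_of_int (sigma_J a J n) = 1"
    by (simp add: sig2 flip: of_int_mult)
  have "eps n * alpha_J a J n = eps n * (real_of_int (sigma_J a J n) * eps n)"
    using E s2 by (metis mult.assoc mult.commute mult.left_neutral)
  also have "\<dots> = real_of_int (sigma_J a J n)" using e2 by (simp add: algebra_simps)
  finally show ?thesis by simp
qed



end
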